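(* Let the points $0,1,2,3\in\mathbb{P}^3(\mathbb{C})$ be represented by the standard basis vectors $e_0,e_1,e_2,e_3$, and let $4=[x_4:y_4:z_4:w_4]$, $5=[x_5:y_5:z_5:w_5]$ be arbitrary. With $X=(x,y,z,w)$ a variable vector, the four quadratic forms $$[015X][234X],\quad [012X][345X],\quad [024X][135X],\quad [045X][123X]$$ are linearly dependent (over $\mathbb{C}$) if and only if $Q=0$, where $$Q=-x_5y_4z_5w_4 + x_4y_5z_5w_4 + x_5y_4z_4w_5 - x_4y_4z_5w_5 .$$
   Context: $[abcX]$ denotes the determinant of the $4\times4$ matrix whose columns are the representative vectors of $a,b,c$ and the variable vector $X$; it is a linear form in $X$ whose zero set is the plane through $a,b,c$ (when these are non-collinear). *)

theory Defs
  imports "HOL-Analysis.Analysis"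
begin

text \<open>Points of P^3(C) are given by representative vectors in C^4, written
  as vector [x,y,z,w].  The bracket [a b c X] is the determinant of the
  4x4 matrix whose columns are a, b, c, X.\<close>

definition bracket :: "complex^4 \<Rightarrow> complex^4 \<Rightarrow> complex^4 \<Rightarrow> complex^4 \<Rightarrow> complex" where
  "bracket a b c X = det (\<chi> i j. ((vector [a, b, c, X]) :: (complex^4)^4) $ j $ i)"

definition lin_dep4 :: "(complex^4 \<Rightarrow> complex) \<Rightarrow> (complex^4 \<Rightarrow> complex) \<Rightarrow>
    (complex^4 \<Rightarrow> complex) \<Rightarrow> (complex^4 \<Rightarrow> complex) \<Rightarrow> bool" where
  "lin_dep4 f1 f2 f3 f4 \<longleftrightarrow> (\<exists>c1 c2 c3 c4 :: complex.
      (c1, c2, c3, c4) \<noteq> (0, 0, 0, 0) \<and>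
      (\<forall>X. c1 * f1 X + c2 * f2 X + c3 * f3 X + c4 * f4 X = 0))"

end

theory Submission
  imports Defs
begin


lemma vector_4 [simp]:
 "(vector [x,y,z,w] ::('a::zero)^4)$1 = x"
 "(vector [x,y,z,w] ::('a::zero)^4)$2 = y"
 "(vector [x,y,z,w] ::('a::zero)^4)$3 = z"
 "(vector [x,y,z,w] ::('a::zero)^4)$4 = w"
  unfolding vector_def by simp_all

lemma det_4:
  "det (A::'a::comm_ring_1^4^4) = A$1$1 * A$2$2 * A$3$3 * A$4$4 - A$1$1 * A$2$2 * A$3$4 * A$4$3 - A$1$1 * A$2$3 * A$3$2 * A$4$4 + A$1$1 * A$2$3 * A$3$4 * A$4$2 + A$1$1 * A$2$4 * A$3$2 * A$4$3 - A$1$1 * A$2$4 * A$3$3 * A$4$2 - A$1$2 * A$2$1 * A$3$3 * A$4$4 + A$1$2 * A$2$1 * A$3$4 * A$4$3 + A$1$2 * A$2$3 * A$3$1 * A$4$4 - A$1$2 * A$2$3 * A$3$4 * A$4$1 - A$1$2 * A$2$4 * A$3$1 * A$4$3 + A$1$2 * A$2$4 * A$3$3 * A$4$1 + A$1$3 * A$2$1 * A$3$2 * A$4$4 - A$1$3 * A$2$1 * A$3$4 * A$4$2 - A$1$3 * A$2$2 * A$3$1 * A$4$4 + A$1$3 * A$2$2 * A$3$4 * A$4$1 + A$1$3 * A$2$4 * A$3$1 * A$4$2 - A$1$3 * A$2$4 * A$3$2 * A$4$1 - A$1$4 * A$2$1 * A$3$2 * A$4$3 + A$1$4 * A$2$1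 * A$3$3 * A$4$2 + A$1$4 * A$2$2 * A$3$1 * A$4$3 - A$1$4 * A$2$2 * A$3$3 * A$4$1 - A$1$4 * A$2$3 * A$3$1 * A$4$2 + A$1$4 * A$2$3 * A$3$2 * A$4$1"
proof -
  have f1: "finite {2::4, 3, 4}" "1 \<notin> {2::4, 3, 4}" by auto
  have f2: "finite {3::4, 4}" "2 \<notin> {3::4, 4}" by auto
  have f3: "finite {4::4}" "3 \<notin> {4::4}" by auto
  show ?thesis
    unfolding det_def UNIV_4
    unfolding sum_over_permutations_insert[OF f1]
    unfolding sum_over_permutations_insert[OF f2]
    unfolding sum_over_permutations_insert[OF f3]
    unfolding permutes_sing
    by (simp add: sign_swap_id permutation_swap_id permutation_compose sign_compose sign_id swap_id_eq algebra_simps)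
qed

definition dot :: "complex^4 \<Rightarrow> complex^4 \<Rightarrow> complex" where
  "dot a v = a$1 * v$1 + a$2 * v$2 + a$3 * v$3 + a$4 * v$4"

definition cross :: "complex^4 \<Rightarrow> complex^4 \<Rightarrow> complex^4 \<Rightarrow> complex^4" where
  "cross a b c = vector [(a$2 * b$3 * c$4 - a$2 * b$4 * c$3 - a$3 * b$2 * c$4 + a$3 * b$4 * c$2 + a$4 * b$2 * c$3 - a$4 * b$3 * c$2), (- a$1 * b$3 * c$4 + a$1 * b$4 * c$3 + a$3 * b$1 * c$4 - a$3 * b$4 * c$1 - a$4 * b$1 * c$3 + a$4 * b$3 * c$1), (a$1 * b$2 * c$4 - a$1 * b$4 * c$2 - a$2 * b$1 * c$4 + a$2 * b$4 * c$1 + a$4 * b$1 * c$2 - a$4 * b$2 * c$1), (- a$1 * b$2 * c$3 + a$1 * b$3 * c$2 + a$2 * b$1 * c$3 - a$2 * b$3 * c$1 - a$3 * b$1 * c$2 + a$3 * b$2 * c$1)]"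

definition D4 :: "complex^4 \<Rightarrow> complex^4 \<Rightarrow> complex^4 \<Rightarrow> complex^4 \<Rightarrow> complex" where
  "D4 r a b c = dot r (cross a b c)"

lemma D4_swap12: "D4 a b c d = - D4 b a c d"
  unfolding D4_def dot_def cross_def by (simp add: algebra_simps)
lemma D4_swap23: "D4 a b c d = - D4 a c b d"
  unfolding D4_def dot_def cross_def by (simp add: algebra_simps)
lemma D4_swap34: "D4 a b c d = - D4 a b d c"
  unfolding D4_def dot_def cross_def by (simp add: algebra_simps)

lemma D4_rep: "D4 a a c d = 0" "D4 a b b d = 0" "D4 a b c c = 0"
   "D4 a b a d = 0" "D4 a b c b = 0" "D4 a b c a = 0"
  unfolding D4_def dot_def cross_def by (simp_all add: algebra_simps)

lemma dot_axis: "dot (axis m 1) v = v $ m"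
  using exhaust_4[of m] by (auto simp: dot_def axis_def)

lemma dot_zero: "dot 0 v = 0" by (simp add: dot_def)

lemma cross_nth: "cross a b c $ m = D4 (axis m 1) a b c"
  by (simp add: D4_def dot_axis)

lemma cramer4:
  "D4 a b c d * v$m = dot a v * cross b c d $m - dot b v * cross a c d $m
      + dot c v * cross a b d $m - dot d v * cross a b c $m"
  using exhaust_4[of m] unfolding D4_def dot_def cross_def
  by (auto simp: algebra_simps)

lemma cross_E_zero:
  assumes "cross a (axis 1 1) (axis 2 1) = 0" "cross a (axis 3 1) (axis 4 1) = 0"
  shows "a = 0"
proof -
  have "a$3 = 0" "a$4 = 0" "a$1 = 0" "a$2 = 0"
    using assms unfolding cross_def vec_eq_iff forall_4 by (simp_all add: axis_def)
  then show ?thesis unfolding vec_eq_iff forall_4 by simp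
qed


lemma D4_sortK1:
  fixes R :: "nat \<Rightarrow> complex^4"
  assumes H: "\<And>i j k l. i<j \<Longrightarrow> j<k \<Longrightarrow> k<l \<Longrightarrow> l<6 \<Longrightarrow> D4 (R i) (R j) (R k) (R l) = 0"
    and "l < 6" "i < j" "j < k" "k < 6"
  shows "D4 (R l) (R i) (R j) (R k) = 0"
proof -
  consider "l < i" | "l = i" | "i < l \<and> l < j" | "l = j" | "j < l \<and> l < k" | "l = k" | "k < l"
    by linarith
  then show ?thesis
  proof cases
    case 1 then show ?thesis using H assms by blast
  next
    case 2 then show ?thesis by (simp add: D4_rep)
  next
    case 3 then show ?thesis using H[of i l j k] assms D4_swap12[of "R l" "R i"] by simp
  next
    case 4 then show ?thesis by (simp add: D4_rep)
  next
    case 5 then show ?thesis using H[of i j l k] assms D4_swap12[of "R l" "R i"] D4_swap23[of "R i" "R l" "R j"] by simp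
  next
    case 6 then show ?thesis by (simp add: D4_rep)
  next
    case 7 then show ?thesis using H[of i j k l] assms D4_swap12[of "R l" "R i"] D4_swap23[of "R i" "R l" "R j"]
        D4_swap34[of "R i" "R j" "R l" "R k"] by simp
  qed
qed

lemma D4_sort3:
  fixes R :: "nat \<Rightarrow> complex^4" and e :: "complex^4"
  assumes H: "\<And>i j k. i<j \<Longrightarrow> j<k \<Longrightarrow> k<6 \<Longrightarrow> D4 e (R i) (R j) (R k) = 0"
    and "l < 6" "i < j" "j < 6"
  shows "D4 e (R l) (R i) (R j) = 0"
proof -
  consider "l < i" | "l = i" | "i < l \<and> l < j" | "l = j" | "j < l"
    by linarith
  then show ?thesis
  proof cases
    case 1 then show ?thesis using H assms by blast
  next
    case 2 then show ?thesis by (simp add: D4_rep)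
  next
    case 3 then show ?thesis using H[of i l j] assms D4_swap23[of e "R l" "R i"] by simp
  next
    case 4 then show ?thesis by (simp add: D4_rep)
  next
    case 5 then show ?thesis using H[of i j l] assms D4_swap23[of e "R l" "R i"] D4_swap34[of e "R i" "R l" "R j"] by simp
  qed
qed

lemma D4_sort2:
  fixes R :: "nat \<Rightarrow> complex^4" and e f :: "complex^4"
  assumes H: "\<And>i j. i<j \<Longrightarrow> j<6 \<Longrightarrow> D4 e (R i) (R j) f = 0"
    and "l < 6" "i < 6"
  shows "D4 e (R l) (R i) f = 0"
proof -
  consider "l < i" | "l = i" | "i < l" by linarith
  then show ?thesis
  proof cases
    case 1 then show ?thesis using H assms by blast
  next
    case 2 then show ?thesis by (simp add: D4_rep)
  next
    case 3 then show ?thesis using H[of i l] assms D4_swap23[of e "R l" "R i"] by simp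
  qed
qed

lemma kernel_exists:
  fixes R :: "nat \<Rightarrow> complex^4"
  assumes H: "\<And>i j k l. i<j \<Longrightarrow> j<k \<Longrightarrow> k<l \<Longrightarrow> l<6 \<Longrightarrow> D4 (R i) (R j) (R k) (R l) = 0"
  shows "\<exists>v. v \<noteq> 0 \<and> (\<forall>l<6. dot (R l) v = 0)"
proof (cases "\<exists>i j k. i<j \<and> j<k \<and> k<6 \<and> cross (R i) (R j) (R k) \<noteq> 0")
  case True
  then obtain i j k where ijk: "i<j" "j<k" "k<6" "cross (R i) (R j) (R k) \<noteq> 0" by blast
  have "dot (R l) (cross (R i) (R j) (R k)) = 0" if "l<6" for l
    using D4_sortK1[of R l i j k] H ijk that unfolding D4_def by blast
  then show ?thesis using ijk by blast
next
  case False
  then have CZ: "\<And>i j k m. i<j \<Longrightarrow> j<k \<Longrightarrow> k<6 \<Longrightarrow> D4 (axis m 1) (R i) (R j) (R k) = 0"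
    by (metis cross_nth zero_index)
  have K2: "D4 (R l) (R i) (R j) (axis m 1) = 0" if "l<6" "i<j" "j<6" for l i j m
  proof -
    have "D4 (axis m 1) (R l) (R i) (R j) = 0"
      using D4_sort3[of "axis m 1" R l i j] CZ that by blast
    moreover have "D4 (R l) (R i) (R j) (axis m 1) = - D4 (axis m 1) (R l) (R i) (R j)"
      using D4_swap34[of "R l" "R i" "R j" "axis m 1"] D4_swap23[of "R l" "R i" "axis m 1" "R j"]
        D4_swap12[of "R l" "axis m 1" "R i" "R j"] by simp
    ultimately show ?thesis by simp
  qed
  show ?thesis
  proof (cases "\<exists>i j m. i<j \<and> j<6 \<and> cross (R i) (R j) (axis m 1) \<noteq> 0")
    case True
    then obtain i j m where ijm: "i<j" "j<6" "cross (R i) (R j) (axis m 1) \<noteq> 0" by blast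
    have "\<forall>l<6. dot (R l) (cross (R i) (R j) (axis m 1)) = 0"
      using K2 ijm unfolding D4_def by blast
    then show ?thesis using ijm by blast
  next
    case False
    then have CZ2: "\<And>i j m n. i<j \<Longrightarrow> j<6 \<Longrightarrow> D4 (axis n 1) (R i) (R j) (axis m 1) = 0"
      by (metis cross_nth zero_index)
    have K3: "D4 (R l) (R i) (axis m 1) (axis n 1) = 0" if "l<6" "i<6" for l i m n
    proof -
      have "D4 (axis n 1) (R l) (R i) (axis m 1) = 0"
        using D4_sort2[of "axis n 1" R "axis m 1" l i] CZ2 that by blast
      moreover have "D4 (R l) (R i) (axis m 1) (axis n 1) = - D4 (axis n 1) (R l) (R i) (axis m 1)"
        using D4_swap34[of "R l" "R i" "axis m 1" "axis n 1"] D4_swap23[of "R l" "R i" "axis n 1" "axis m 1"]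
          D4_swap12[of "R l" "axis n 1" "R i" "axis m 1"] by simp
      ultimately show ?thesis by simp
    qed
    show ?thesis
    proof (cases "\<exists>i m n. i<6 \<and> cross (R i) (axis m 1) (axis n 1) \<noteq> 0")
      case True
      then obtain i m n where imn: "i<6" "cross (R i) (axis m 1) (axis n 1) \<noteq> 0" by blast
      have "\<forall>l<6. dot (R l) (cross (R i) (axis m 1) (axis n 1)) = 0"
        using K3 imn unfolding D4_def by blast
      then show ?thesis using imn by blast
    next
      case False
      then have "\<forall>l<6. R l = 0" using cross_E_zero by blast
      then have "\<forall>l<6. dot (R l) (axis 1 1) = 0" by (simp add: dot_zero)
      moreover have "(axis 1 1 :: complex^4) \<noteq> 0" by (simp add: axis_eq_0_iff)
      ultimately show ?thesis by blast
    qed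
  qed
qed



definition rowv :: "complex \<Rightarrow> complex \<Rightarrow> complex \<Rightarrow> complex \<Rightarrow> complex \<Rightarrow> complex \<Rightarrow> complex \<Rightarrow> complex \<Rightarrow> nat \<Rightarrow> complex^4" where
  "rowv x4 y4 z4 w4 x5 y5 z5 w5 n = [vector [0, 0, (w4 * z5), (- z4 * w5 + w4 * z5)],
   vector [(y4 * w5), 0, 0, (y4 * w5 - w4 * y5)],
   vector [(- y4 * z5), (- y4 * z5 + z4 * y5), (- y4 * z5), (- y4 * z5 + z4 * y5)],
   vector [(- x4 * w5), 0, (- w4 * x5), 0],
   vector [(x4 * z5), (x4 * z5 - z4 * x5), 0, 0],
   vector [0, (- x4 * y5 + y4 * x5), (y4 * x5), 0]] ! n"

definition Qp :: "complex \<Rightarrow> complex \<Rightarrow> complex \<Rightarrow> complex \<Rightarrow> complex \<Rightarrow> complex \<Rightarrow> complex \<Rightarrow> complex \<Rightarrow> complex" where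
  "Qp x4 y4 z4 w4 x5 y5 z5 w5 = - x5 * y4 * z5 * w4 + x4 * y5 * z5 * w4 + x5 * y4 * z4 * w5 - x4 * y4 * z5 * w5"

lemma minor_0123: "D4 (rowv x4 y4 z4 w4 x5 y5 z5 w5 0) (rowv x4 y4 z4 w4 x5 y5 z5 w5 1) (rowv x4 y4 z4 w4 x5 y5 z5 w5 2) (rowv x4 y4 z4 w4 x5 y5 z5 w5 3) = Qp x4 y4 z4 w4 x5 y5 z5 w5 * (y4 * w4 * z5 * w5 - z4 * w4 * y5 * w5)"
  unfolding D4_def dot_def cross_def rowv_def Qp_def by (simp add: algebra_simps)

lemma minor_0124: "D4 (rowv x4 y4 z4 w4 x5 y5 z5 w5 0) (rowv x4 y4 z4 w4 x5 y5 z5 w5 1) (rowv x4 y4 z4 w4 x5 y5 z5 w5 2) (rowv x4 y4 z4 w4 x5 y5 z5 w5 4) = Qp x4 y4 z4 w4 x5 y5 z5 w5 * (- y4 * z4 * z5 * w5 + z4 * w4 * y5 * z5)"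
  unfolding D4_def dot_def cross_def rowv_def Qp_def by (simp add: algebra_simps)

lemma minor_0125: "D4 (rowv x4 y4 z4 w4 x5 y5 z5 w5 0) (rowv x4 y4 z4 w4 x5 y5 z5 w5 1) (rowv x4 y4 z4 w4 x5 y5 z5 w5 2) (rowv x4 y4 z4 w4 x5 y5 z5 w5 5) = Qp x4 y4 z4 w4 x5 y5 z5 w5 * (y4 * z4 * y5 * w5 - y4 * w4 * y5 * z5)"
  unfolding D4_def dot_def cross_def rowv_def Qp_def by (simp add: algebra_simps)

lemma minor_0134: "D4 (rowv x4 y4 z4 w4 x5 y5 z5 w5 0) (rowv x4 y4 z4 w4 x5 y5 z5 w5 1) (rowv x4 y4 z4 w4 x5 y5 z5 w5 3) (rowv x4 y4 z4 w4 x5 y5 z5 w5 4) = Qp x4 y4 z4 w4 x5 y5 z5 w5 * (x4 * w4 * z5 * w5 - z4 * w4 * x5 * w5)"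
  unfolding D4_def dot_def cross_def rowv_def Qp_def by (simp add: algebra_simps)

lemma minor_0135: "D4 (rowv x4 y4 z4 w4 x5 y5 z5 w5 0) (rowv x4 y4 z4 w4 x5 y5 z5 w5 1) (rowv x4 y4 z4 w4 x5 y5 z5 w5 3) (rowv x4 y4 z4 w4 x5 y5 z5 w5 5) = Qp x4 y4 z4 w4 x5 y5 z5 w5 * (- x4 * w4 * y5 * w5 + y4 * w4 * x5 * w5)"
  unfolding D4_def dot_def cross_def rowv_def Qp_def by (simp add: algebra_simps)

lemma minor_0145: "D4 (rowv x4 y4 z4 w4 x5 y5 z5 w5 0) (rowv x4 y4 z4 w4 x5 y5 z5 w5 1) (rowv x4 y4 z4 w4 x5 y5 z5 w5 4) (rowv x4 y4 z4 w4 x5 y5 z5 w5 5) = Qp x4 y4 z4 w4 x5 y5 z5 w5 * (x4 * w4 * y5 * z5 - y4 * z4 * x5 * w5)"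
  unfolding D4_def dot_def cross_def rowv_def Qp_def by (simp add: algebra_simps)

lemma minor_0234: "D4 (rowv x4 y4 z4 w4 x5 y5 z5 w5 0) (rowv x4 y4 z4 w4 x5 y5 z5 w5 2) (rowv x4 y4 z4 w4 x5 y5 z5 w5 3) (rowv x4 y4 z4 w4 x5 y5 z5 w5 4) = Qp x4 y4 z4 w4 x5 y5 z5 w5 * (- x4 * z4 * z5 * w5 + z4 * w4 * x5 * z5)"
  unfolding D4_def dot_def cross_def rowv_def Qp_def by (simp add: algebra_simps)

lemma minor_0235: "D4 (rowv x4 y4 z4 w4 x5 y5 z5 w5 0) (rowv x4 y4 z4 w4 x5 y5 z5 w5 2) (rowv x4 y4 z4 w4 x5 y5 z5 w5 3) (rowv x4 y4 z4 w4 x5 y5 z5 w5 5) = Qp x4 y4 z4 w4 x5 y5 z5 w5 * (x4 * z4 * y5 * w5 - y4 * w4 * x5 * z5)"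
  unfolding D4_def dot_def cross_def rowv_def Qp_def by (simp add: algebra_simps)

lemma minor_0245: "D4 (rowv x4 y4 z4 w4 x5 y5 z5 w5 0) (rowv x4 y4 z4 w4 x5 y5 z5 w5 2) (rowv x4 y4 z4 w4 x5 y5 z5 w5 4) (rowv x4 y4 z4 w4 x5 y5 z5 w5 5) = Qp x4 y4 z4 w4 x5 y5 z5 w5 * (- x4 * z4 * y5 * z5 + y4 * z4 * x5 * z5)"
  unfolding D4_def dot_def cross_def rowv_def Qp_def by (simp add: algebra_simps)

lemma minor_0345: "D4 (rowv x4 y4 z4 w4 x5 y5 z5 w5 0) (rowv x4 y4 z4 w4 x5 y5 z5 w5 3) (rowv x4 y4 z4 w4 x5 y5 z5 w5 4) (rowv x4 y4 z4 w4 x5 y5 z5 w5 5) = Qp x4 y4 z4 w4 x5 y5 z5 w5 * (x4 * z4 * x5 * w5 - x4 * w4 * x5 * z5)"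
  unfolding D4_def dot_def cross_def rowv_def Qp_def by (simp add: algebra_simps)

lemma minor_1234: "D4 (rowv x4 y4 z4 w4 x5 y5 z5 w5 1) (rowv x4 y4 z4 w4 x5 y5 z5 w5 2) (rowv x4 y4 z4 w4 x5 y5 z5 w5 3) (rowv x4 y4 z4 w4 x5 y5 z5 w5 4) = Qp x4 y4 z4 w4 x5 y5 z5 w5 * (x4 * y4 * z5 * w5 - z4 * w4 * x5 * y5)"
  unfolding D4_def dot_def cross_def rowv_def Qp_def by (simp add: algebra_simps)

lemma minor_1235: "D4 (rowv x4 y4 z4 w4 x5 y5 z5 w5 1) (rowv x4 y4 z4 w4 x5 y5 z5 w5 2) (rowv x4 y4 z4 w4 x5 y5 z5 w5 3) (rowv x4 y4 z4 w4 x5 y5 z5 w5 5) = Qp x4 y4 z4 w4 x5 y5 z5 w5 * (- x4 * y4 * y5 * w5 + y4 * w4 * x5 * y5)"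
  unfolding D4_def dot_def cross_def rowv_def Qp_def by (simp add: algebra_simps)

lemma minor_1245: "D4 (rowv x4 y4 z4 w4 x5 y5 z5 w5 1) (rowv x4 y4 z4 w4 x5 y5 z5 w5 2) (rowv x4 y4 z4 w4 x5 y5 z5 w5 4) (rowv x4 y4 z4 w4 x5 y5 z5 w5 5) = Qp x4 y4 z4 w4 x5 y5 z5 w5 * (x4 * y4 * y5 * z5 - y4 * z4 * x5 * y5)"
  unfolding D4_def dot_def cross_def rowv_def Qp_def by (simp add: algebra_simps)

lemma minor_1345: "D4 (rowv x4 y4 z4 w4 x5 y5 z5 w5 1) (rowv x4 y4 z4 w4 x5 y5 z5 w5 3) (rowv x4 y4 z4 w4 x5 y5 z5 w5 4) (rowv x4 y4 z4 w4 x5 y5 z5 w5 5) = Qp x4 y4 z4 w4 x5 y5 z5 w5 * (- x4 * y4 * x5 * w5 + x4 * w4 * x5 * y5)"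
  unfolding D4_def dot_def cross_def rowv_def Qp_def by (simp add: algebra_simps)

lemma minor_2345: "D4 (rowv x4 y4 z4 w4 x5 y5 z5 w5 2) (rowv x4 y4 z4 w4 x5 y5 z5 w5 3) (rowv x4 y4 z4 w4 x5 y5 z5 w5 4) (rowv x4 y4 z4 w4 x5 y5 z5 w5 5) = Qp x4 y4 z4 w4 x5 y5 z5 w5 * (x4 * y4 * x5 * z5 - x4 * z4 * x5 * y5)"
  unfolding D4_def dot_def cross_def rowv_def Qp_def by (simp add: algebra_simps)



lemma sum_eq:
  "c1 * (bracket (vector [1, 0, 0, 0] :: complex^4) (vector [0, 1, 0, 0] :: complex^4) (vector [x5, y5, z5, w5] :: complex^4) X * bracket (vector [0, 0, 1, 0] :: complex^4) (vector [0, 0, 0, 1] :: complex^4) (vector [x4, y4, z4, w4] :: complex^4) X) + c2 * (bracket (vector [1, 0, 0, 0] :: complex^4) (vector [0, 1, 0, 0] :: complex^4) (vector [0, 0, 1, 0] :: complex^4) X * bracket (vector [0, 0, 0, 1] :: complex^4) (vector [x4, y4, z4, w4] :: complex^4) (vector [x5, y5, z5, w5] :: complex^4) X) + c3 * (bracket (vector [1, 0, 0, 0] :: complex^4) (vector [0, 0, 1, 0] :: complex^4) (vector [x4, y4, z4, w4] :: complex^4) X * bracket (vector [0, 1, 0, 0] :: complex^4) (vector [0, 0, 0, 1] :: complex^4) (vector [x5, y5, z5, w5] :: complex^4) X) + c4 * (bracket (vector [1, 0, 0, 0] :: complex^4) (vector [x4, y4, z4, w4] :: complex^4) (vector [x5,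 y5, z5, w5] :: complex^4) X * bracket (vector [0, 1, 0, 0] :: complex^4) (vector [0, 0, 1, 0] :: complex^4) (vector [0, 0, 0, 1] :: complex^4) X) = dot (rowv x4 y4 z4 w4 x5 y5 z5 w5 0) (vector [c1, c2, c3, c4]) * X$1 * X$2 + dot (rowv x4 y4 z4 w4 x5 y5 z5 w5 1) (vector [c1, c2, c3, c4]) * X$1 * X$3 + dot (rowv x4 y4 z4 w4 x5 y5 z5 w5 2) (vector [c1, c2, c3, c4]) * X$1 * X$4 + dot (rowv x4 y4 z4 w4 x5 y5 z5 w5 3) (vector [c1, c2, c3, c4]) * X$2 * X$3 + dot (rowv x4 y4 z4 w4 x5 y5 z5 w5 4) (vector [c1, c2, c3, c4]) * X$2 * X$4 + dot (rowv x4 y4 z4 w4 x5 y5 z5 w5 5) (vector [c1, c2, c3, c4]) * X$3 * X$4"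
  unfolding bracket_def det_4 rowv_def dot_def by simp (algebra)

lemma lt6: "l < (6::nat) \<Longrightarrow> l = 0 \<or> l = 1 \<or> l = 2 \<or> l = 3 \<or> l = 4 \<or> l = 5" by auto

lemma quad: "i<j \<Longrightarrow> j<k \<Longrightarrow> k<l \<Longrightarrow> l<(6::nat) \<Longrightarrow>
  (i,j,k,l) \<in> {(0,1,2,3),(0,1,2,4),(0,1,2,5),(0,1,3,4),(0,1,3,5),(0,1,4,5),(0,2,3,4),(0,2,3,5),(0,2,4,5),(0,3,4,5),
    (1,2,3,4),(1,2,3,5),(1,2,4,5),(1,3,4,5),(2,3,4,5)}"
proof -
  assume a: "i<j" "j<k" "k<l" "l<(6::nat)"
  have "i = 0 \<or> i = 1 \<or> i = 2" using a by linarith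
  moreover have "j = 1 \<or> j = 2 \<or> j = 3" using a by linarith
  moreover have "k = 2 \<or> k = 3 \<or> k = 4" using a by linarith
  moreover have "l = 3 \<or> l = 4 \<or> l = 5" using a by linarith
  ultimately show ?thesis using a by (elim disjE) simp_all
qed


lemma Qcase:
  fixes x4 y4 z4 w4 x5 y5 z5 w5 :: complex
  assumes h0134: "Qp x4 y4 z4 w4 x5 y5 z5 w5 * (x4 * w4 * z5 * w5 - z4 * w4 * x5 * w5) = 0"
    and h0135: "Qp x4 y4 z4 w4 x5 y5 z5 w5 * (- x4 * w4 * y5 * w5 + y4 * w4 * x5 * w5) = 0"
    and h0145: "Qp x4 y4 z4 w4 x5 y5 z5 w5 * (x4 * w4 * y5 * z5 - y4 * z4 * x5 * w5) = 0"
    and h0235: "Qp x4 y4 z4 w4 x5 y5 z5 w5 * (x4 * z4 * y5 * w5 - y4 * w4 * x5 * z5) = 0"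
    and h0245: "Qp x4 y4 z4 w4 x5 y5 z5 w5 * (- x4 * z4 * y5 * z5 + y4 * z4 * x5 * z5) = 0"
    and h1234: "Qp x4 y4 z4 w4 x5 y5 z5 w5 * (x4 * y4 * z5 * w5 - z4 * w4 * x5 * y5) = 0"
    and h1245: "Qp x4 y4 z4 w4 x5 y5 z5 w5 * (x4 * y4 * y5 * z5 - y4 * z4 * x5 * y5) = 0"
  shows "Qp x4 y4 z4 w4 x5 y5 z5 w5 = 0"
proof (rule ccontr)
  assume Q: "Qp x4 y4 z4 w4 x5 y5 z5 w5 \<noteq> 0"
  then have g0134: "x4 * w4 * z5 * w5 - z4 * w4 * x5 * w5 = 0"
    and g0135: "- x4 * w4 * y5 * w5 + y4 * w4 * x5 * w5 = 0"
    and g0145: "x4 * w4 * y5 * z5 - y4 * z4 * x5 * w5 = 0"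
    and g0235: "x4 * z4 * y5 * w5 - y4 * w4 * x5 * z5 = 0"
    and g0245: "- x4 * z4 * y5 * z5 + y4 * z4 * x5 * z5 = 0"
    and g1234: "x4 * y4 * z5 * w5 - z4 * w4 * x5 * y5 = 0"
    and g1245: "x4 * y4 * y5 * z5 - y4 * z4 * x5 * y5 = 0"
    using h0134 h0135 h0145 h0235 h0245 h1234 h1245 by simp_all
  have Qe: "Qp x4 y4 z4 w4 x5 y5 z5 w5 = z5 * w4 * (x4*y5 - y4*x5) - y4 * w5 * (x4*z5 - z4*x5)"
    unfolding Qp_def by algebra
  have "(z5 * w4 * (x4*y5 - y4*x5) \<noteq> 0) \<or> (y4 * w5 * (x4*z5 - z4*x5) \<noteq> 0)"
    using Q Qe by auto
  then show False
  proof
    assume A: "z5 * w4 * (x4*y5 - y4*x5) \<noteq> 0"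
    then have nz: "z5 \<noteq> 0" "w4 \<noteq> 0" "x4*y5 - y4*x5 \<noteq> 0" by auto
    have "z4 * (z5 * (x4*y5 - y4*x5)) = 0" using g0245 by algebra
    then have z4: "z4 = 0" using nz by simp
    have "w5 * (w4 * (x4*y5 - y4*x5)) = 0" using g0135 by algebra
    then have w5: "w5 = 0" using nz by simp
    have "(x4 * y5) * (w4 * z5) = 0" using g0145 z4 by algebra
    then have a: "x4 * y5 = 0" using nz by simp
    have "(y4 * x5) * (w4 * z5) = 0" using g0235 z4 by algebra
    then have b: "y4 * x5 = 0" using nz by simp
    have "x4*y5 - y4*x5 = 0" by (simp add: a b)
    then show False using nz by simp
  next
    assume B: "y4 * w5 * (x4*z5 - z4*x5) \<noteq> 0"
    then have nz: "y4 \<noteq> 0" "w5 \<noteq> 0" "x4*z5 - z4*x5 \<noteq> 0" by auto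
    have "y5 * (y4 * (x4*z5 - z4*x5)) = 0" using g1245 by algebra
    then have y5: "y5 = 0" using nz by simp
    have "w4 * (w5 * (x4*z5 - z4*x5)) = 0" using g0134 by algebra
    then have w4: "w4 = 0" using nz by simp
    have "(z4 * x5) * (y4 * w5) = 0" using g0145 w4 by algebra
    then have a: "z4 * x5 = 0" using nz by simp
    have "(x4 * z5) * (y4 * w5) = 0" using g1234 w4 by algebra
    then have b: "x4 * z5 = 0" using nz by simp
    have "x4*z5 - z4*x5 = 0" by (simp add: a b)
    then show False using nz by simp
  qed
qed

lemma vec4_eta: "vector [v$1, v$2, v$3, v$4] = (v::complex^4)"
  unfolding vec_eq_iff forall_4 by simp


theorem mainTheorem3:
  fixes x4 y4 z4 w4 x5 y5 z5 w5 :: complex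
  assumes "(x4, y4, z4, w4) \<noteq> (0, 0, 0, 0)"
      and "(x5, y5, z5, w5) \<noteq> (0, 0, 0, 0)"
  defines "p0 \<equiv> (vector [1, 0, 0, 0] :: complex^4)"
      and "p1 \<equiv> (vector [0, 1, 0, 0] :: complex^4)"
      and "p2 \<equiv> (vector [0, 0, 1, 0] :: complex^4)"
      and "p3 \<equiv> (vector [0, 0, 0, 1] :: complex^4)"
      and "p4 \<equiv> (vector [x4, y4, z4, w4] :: complex^4)"
      and "p5 \<equiv> (vector [x5, y5, z5, w5] :: complex^4)"
  shows "lin_dep4 (\<lambda>X. bracket p0 p1 p5 X * bracket p2 p3 p4 X)
                  (\<lambda>X. bracket p0 p1 p2 X * bracket p3 p4 p5 X)
                  (\<lambda>X. bracket p0 p2 p4 X * bracket p1 p3 p5 X)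
                  (\<lambda>X. bracket p0 p4 p5 X * bracket p1 p2 p3 X)
         \<longleftrightarrow> - x5 * y4 * z5 * w4 + x4 * y5 * z5 * w4 + x5 * y4 * z4 * w5 - x4 * y4 * z5 * w5 = 0"

proof -
  let ?R = "rowv x4 y4 z4 w4 x5 y5 z5 w5"
  let ?LD = "lin_dep4 (\<lambda>X. bracket p0 p1 p5 X * bracket p2 p3 p4 X)
                  (\<lambda>X. bracket p0 p1 p2 X * bracket p3 p4 p5 X)
                  (\<lambda>X. bracket p0 p2 p4 X * bracket p1 p3 p5 X)
                  (\<lambda>X. bracket p0 p4 p5 X * bracket p1 p2 p3 X)"
  have S: "c1 * (bracket p0 p1 p5 X * bracket p2 p3 p4 X) + c2 * (bracket p0 p1 p2 X * bracket p3 p4 p5 X)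
     + c3 * (bracket p0 p2 p4 X * bracket p1 p3 p5 X) + c4 * (bracket p0 p4 p5 X * bracket p1 p2 p3 X)
     = (let v = vector [c1, c2, c3, c4] in dot (rowv x4 y4 z4 w4 x5 y5 z5 w5 0) v * X$1 * X$2 + dot (rowv x4 y4 z4 w4 x5 y5 z5 w5 1) v * X$1 * X$3 + dot (rowv x4 y4 z4 w4 x5 y5 z5 w5 2) v * X$1 * X$4 + dot (rowv x4 y4 z4 w4 x5 y5 z5 w5 3) v * X$2 * X$3 + dot (rowv x4 y4 z4 w4 x5 y5 z5 w5 4) v * X$2 * X$4 + dot (rowv x4 y4 z4 w4 x5 y5 z5 w5 5) v * X$3 * X$4)" for c1 c2 c3 c4 :: complex and X :: "complex^4"
    unfolding p0_def p1_def p2_def p3_def p4_def p5_def Let_def by (rule sum_eq)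
  have L: "?LD \<longleftrightarrow> (\<exists>v. v \<noteq> 0 \<and> (\<forall>l<6. dot (?R l) v = 0))"
  proof
    assume "?LD"
    then obtain c1 c2 c3 c4 :: complex where nz: "(c1, c2, c3, c4) \<noteq> (0, 0, 0, 0)"
      and all: "\<forall>X. c1 * (bracket p0 p1 p5 X * bracket p2 p3 p4 X) + c2 * (bracket p0 p1 p2 X * bracket p3 p4 p5 X)
     + c3 * (bracket p0 p2 p4 X * bracket p1 p3 p5 X) + c4 * (bracket p0 p4 p5 X * bracket p1 p2 p3 X) = 0"
      unfolding lin_dep4_def by blast
    let ?v = "vector [c1, c2, c3, c4] :: complex^4"
    have z: "(let v = ?v in dot (rowv x4 y4 z4 w4 x5 y5 z5 w5 0) v * X$1 * X$2 + dot (rowv x4 y4 z4 w4 x5 y5 z5 w5 1) v * X$1 * X$3 + dot (rowv x4 y4 z4 w4 x5 y5 z5 w5 2) v * X$1 * X$4 + dot (rowv x4 y4 z4 w4 x5 y5 z5 w5 3) v * X$2 * X$3 + dot (rowv x4 y4 z4 w4 x5 y5 z5 w5 4) v * X$2 * X$4 + dot (rowv x4 y4 z4 w4 x5 y5 z5 w5 5) v * X$3 * X$4) = 0" for X :: "complex^4"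
      using all[rule_format, of X] unfolding S by simp
    have d0: "dot (?R 0) ?v = 0" using z[of "vector [1, 1, 0, 0] :: complex^4"] by simp
    have d1: "dot (?R 1) ?v = 0" using z[of "vector [1, 0, 1, 0] :: complex^4"] by simp
    have d2: "dot (?R 2) ?v = 0" using z[of "vector [1, 0, 0, 1] :: complex^4"] by simp
    have d3: "dot (?R 3) ?v = 0" using z[of "vector [0, 1, 1, 0] :: complex^4"] by simp
    have d4: "dot (?R 4) ?v = 0" using z[of "vector [0, 1, 0, 1] :: complex^4"] by simp
    have d5: "dot (?R 5) ?v = 0" using z[of "vector [0, 0, 1, 1] :: complex^4"] by simp
    have vnz: "?v \<noteq> 0"
    proof
      assume "?v = 0"
      then have "?v$1 = 0" "?v$2 = 0" "?v$3 = 0" "?v$4 = 0" by simp_all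
      then show False using nz by simp
    qed
    have "\<forall>l<6. dot (?R l) ?v = 0"
      using d0 d1 d2 d3 d4 d5 lt6 by metis
    then show "\<exists>v. v \<noteq> 0 \<and> (\<forall>l<6. dot (?R l) v = 0)" using vnz by blast
  next
    assume "\<exists>v. v \<noteq> 0 \<and> (\<forall>l<6. dot (?R l) v = 0)"
    then obtain v where vnz: "v \<noteq> 0" and dz: "\<forall>l<6. dot (?R l) v = 0" by blast
    have "(v$1, v$2, v$3, v$4) \<noteq> (0, 0, 0, 0)"
    proof
      assume "(v$1, v$2, v$3, v$4) = (0, 0, 0, 0)"
      then have "v = 0" unfolding vec_eq_iff forall_4 by simp
      then show False using vnz by simp
    qed
    moreover have "\<forall>X. v$1 * (bracket p0 p1 p5 X * bracket p2 p3 p4 X) + v$2 * (bracket p0 p1 p2 X * bracket p3 p4 p5 X)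
     + v$3 * (bracket p0 p2 p4 X * bracket p1 p3 p5 X) + v$4 * (bracket p0 p4 p5 X * bracket p1 p2 p3 X) = 0"
    proof
      fix X
      show "v$1 * (bracket p0 p1 p5 X * bracket p2 p3 p4 X) + v$2 * (bracket p0 p1 p2 X * bracket p3 p4 p5 X)
     + v$3 * (bracket p0 p2 p4 X * bracket p1 p3 p5 X) + v$4 * (bracket p0 p4 p5 X * bracket p1 p2 p3 X) = 0"
        unfolding S vec4_eta Let_def using dz by simp
    qed
    ultimately show ?LD unfolding lin_dep4_def by blast
  qed
  have K: "Qp x4 y4 z4 w4 x5 y5 z5 w5 = 0 \<longleftrightarrow> (\<exists>v. v \<noteq> 0 \<and> (\<forall>l<6. dot (?R l) v = 0))"
  proof
    assume Q0: "Qp x4 y4 z4 w4 x5 y5 z5 w5 = 0"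
    show "\<exists>v. v \<noteq> 0 \<and> (\<forall>l<6. dot (?R l) v = 0)"
    proof (rule kernel_exists)
      fix i j k l :: nat
      assume "i<j" "j<k" "k<l" "l<6"
      then have "(i,j,k,l) \<in> {(0,1,2,3),(0,1,2,4),(0,1,2,5),(0,1,3,4),(0,1,3,5),(0,1,4,5),(0,2,3,4),(0,2,3,5),(0,2,4,5),(0,3,4,5),
    (1,2,3,4),(1,2,3,5),(1,2,4,5),(1,3,4,5),(2,3,4,5)}" by (rule quad)
      then show "D4 (?R i) (?R j) (?R k) (?R l) = 0"
        using Q0 by (auto simp only: insert_iff empty_iff prod.inject minor_0123 minor_0124 minor_0125 minor_0134
          minor_0135 minor_0145 minor_0234 minor_0235 minor_0245 minor_0345 minor_1234 minor_1235 minor_1245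
          minor_1345 minor_2345 mult_zero_left)
    qed
  next
    assume "\<exists>v. v \<noteq> 0 \<and> (\<forall>l<6. dot (?R l) v = 0)"
    then obtain v where vnz: "v \<noteq> 0" and dz: "\<forall>l<6. dot (?R l) v = 0" by blast
    obtain m where vm: "v$m \<noteq> 0" using vnz by (metis vec_eq_iff zero_index)
    have DZ: "D4 (?R i) (?R j) (?R k) (?R l) = 0" if "i<6" "j<6" "k<6" "l<6" for i j k l
    proof -
      have "D4 (?R i) (?R j) (?R k) (?R l) * v$m = 0"
        unfolding cramer4 using dz that by simp
      then show ?thesis using vm by simp
    qed
    have m0134: "Qp x4 y4 z4 w4 x5 y5 z5 w5 * (x4 * w4 * z5 * w5 - z4 * w4 * x5 * w5) = 0" using DZ[of 0 1 3 4, unfolded minor_0134] by simp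
    have m0135: "Qp x4 y4 z4 w4 x5 y5 z5 w5 * (- x4 * w4 * y5 * w5 + y4 * w4 * x5 * w5) = 0" using DZ[of 0 1 3 5, unfolded minor_0135] by simp
    have m0145: "Qp x4 y4 z4 w4 x5 y5 z5 w5 * (x4 * w4 * y5 * z5 - y4 * z4 * x5 * w5) = 0" using DZ[of 0 1 4 5, unfolded minor_0145] by simp
    have m0235: "Qp x4 y4 z4 w4 x5 y5 z5 w5 * (x4 * z4 * y5 * w5 - y4 * w4 * x5 * z5) = 0" using DZ[of 0 2 3 5, unfolded minor_0235] by simp
    have m0245: "Qp x4 y4 z4 w4 x5 y5 z5 w5 * (- x4 * z4 * y5 * z5 + y4 * z4 * x5 * z5) = 0" using DZ[of 0 2 4 5, unfolded minor_0245] by simp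
    have m1234: "Qp x4 y4 z4 w4 x5 y5 z5 w5 * (x4 * y4 * z5 * w5 - z4 * w4 * x5 * y5) = 0" using DZ[of 1 2 3 4, unfolded minor_1234] by simp
    have m1245: "Qp x4 y4 z4 w4 x5 y5 z5 w5 * (x4 * y4 * y5 * z5 - y4 * z4 * x5 * y5) = 0" using DZ[of 1 2 4 5, unfolded minor_1245] by simp
    show "Qp x4 y4 z4 w4 x5 y5 z5 w5 = 0"
      by (rule Qcase[OF m0134 m0135 m0145 m0235 m0245 m1234 m1245])
  qed
  show ?thesis using L K unfolding Qp_def by blast
qed

end
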